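(* Let $\mathcal F\subseteq\mathcal O(A)$ be a conservative clone with $\mathrm r(\mathcal F)=r\ge3$. Let $n$ be a natural number, $\mathbf a\in A^n_{<r}$, $f\in\mathcal F_{[n]}$, and $\sigma\colon A\to A$ an arbitrary function. Then $f(\sigma(\mathbf a))=\sigma(f(\mathbf a))$, where $\sigma(\mathbf a)$ is applied componentwise.
   Context: $\mathcal O(A)=\bigcup_{n<\omega}A^{A^n}$; $\mathcal F_{[n]}=\mathcal F\cap A^{A^n}$. $\mathrm{ran}\,\mathbf a$ is the set of entries of $\mathbf a\in A^n$; $A^n_{<r}=\{\mathbf a\in A^n:|\mathrm{ran}\,\mathbf a|<r\}$. A clone with carrier $A$ is a subset of $\mathcal O(A)$ containing all projections and closed under composition; it is conservative if $f(\mathbf a)\in\mathrm{ran}\,\mathbf a$ for all its members $f$ and all $\mathbf a$. $\mathrm r(\mathcal F)$ is the least $r$ such that $\mathcal F$ contains an $r$-ary function that is not a projection ($\omega$ if there is none). *)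

theory Defs
  imports "HOL-Library.FuncSet" "HOL-Library.Extended_Nat"
begin

definition tuples :: "'a set \<Rightarrow> nat \<Rightarrow> (nat \<Rightarrow> 'a) set" where
  "tuples A n = PiE {..<n} (\<lambda>_. A)"

definition ops :: "'a set \<Rightarrow> nat \<Rightarrow> ((nat \<Rightarrow> 'a) \<Rightarrow> 'a) set" where
  "ops A n = tuples A n \<rightarrow>\<^sub>E A"

definition allops :: "'a set \<Rightarrow> (nat \<times> ((nat \<Rightarrow> 'a) \<Rightarrow> 'a)) set" where
  "allops A = {(n, f). f \<in> ops A n}"

definition proj :: "'a set \<Rightarrow> nat \<Rightarrow> nat \<Rightarrow> ((nat \<Rightarrow> 'a) \<Rightarrow> 'a)" where
  "proj A n i = (\<lambda>x\<in>tuples A n. x i)"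

definition is_proj :: "'a set \<Rightarrow> nat \<Rightarrow> ((nat \<Rightarrow> 'a) \<Rightarrow> 'a) \<Rightarrow> bool" where
  "is_proj A n f \<longleftrightarrow> (\<exists>i<n. f = proj A n i)"

definition comp_op :: "'a set \<Rightarrow> nat \<Rightarrow> nat \<Rightarrow> ((nat \<Rightarrow> 'a) \<Rightarrow> 'a)
    \<Rightarrow> (nat \<Rightarrow> ((nat \<Rightarrow> 'a) \<Rightarrow> 'a)) \<Rightarrow> ((nat \<Rightarrow> 'a) \<Rightarrow> 'a)" where
  "comp_op A n m f g = (\<lambda>x\<in>tuples A m. f (\<lambda>i\<in>{..<n}. g i x))"

definition clone :: "'a set \<Rightarrow> (nat \<times> ((nat \<Rightarrow> 'a) \<Rightarrow> 'a)) set \<Rightarrow> bool" where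
  "clone A F \<longleftrightarrow> F \<subseteq> allops A
     \<and> (\<forall>n i. i < n \<longrightarrow> (n, proj A n i) \<in> F)
     \<and> (\<forall>n m f g. (n, f) \<in> F \<and> (\<forall>i<n. (m, g i) \<in> F) \<longrightarrow> (m, comp_op A n m f g) \<in> F)"

definition conservative :: "'a set \<Rightarrow> (nat \<times> ((nat \<Rightarrow> 'a) \<Rightarrow> 'a)) set \<Rightarrow> bool" where
  "conservative A F \<longleftrightarrow> (\<forall>(n, f) \<in> F. \<forall>a \<in> tuples A n. f a \<in> a ` {..<n})"

definition rnk :: "'a set \<Rightarrow> (nat \<times> ((nat \<Rightarrow> 'a) \<Rightarrow> 'a)) set \<Rightarrow> enat" where
  "rnk A F = (if \<exists>n f. (n, f) \<in> F \<and> \<not> is_proj A n f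
              then enat (LEAST n. \<exists>f. (n, f) \<in> F \<and> \<not> is_proj A n f) else \<infinity>)"

definition tuples_lt :: "'a set \<Rightarrow> nat \<Rightarrow> enat \<Rightarrow> (nat \<Rightarrow> 'a) set" where
  "tuples_lt A n r = {a \<in> tuples A n. enat (card (a ` {..<n})) < r}"

definition app_tuple :: "nat \<Rightarrow> ('a \<Rightarrow> 'a) \<Rightarrow> (nat \<Rightarrow> 'a) \<Rightarrow> (nat \<Rightarrow> 'a)" where
  "app_tuple n \<sigma> a = (\<lambda>i\<in>{..<n}. \<sigma> (a i))"

end

theory Submission
  imports Defs
begin

lemma small_proj:
  assumes "(m, g) \<in> F" "enat m < rnk A F"
  shows "is_proj A m g"
proof (rule ccontr)
  assume h: "\<not> is_proj A m g"
  hence ex: "\<exists>n f. (n, f) \<in> F \<and> \<not> is_proj A n f" using assms(1) by blast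
  have "(LEAST n. \<exists>f. (n, f) \<in> F \<and> \<not> is_proj A n f) \<le> m"
    using h assms(1) by (intro Least_le) blast
  thus False using assms(2) ex unfolding rnk_def by simp
qed

theorem claim1:
  fixes A :: "'a set" and F :: "(nat \<times> ((nat \<Rightarrow> 'a) \<Rightarrow> 'a)) set"
    and r :: enat and n :: nat and a :: "nat \<Rightarrow> 'a"
    and f :: "(nat \<Rightarrow> 'a) \<Rightarrow> 'a" and \<sigma> :: "'a \<Rightarrow> 'a"
  assumes "clone A F" and "conservative A F"
    and "rnk A F = r" and "r \<ge> 3"
    and "a \<in> tuples_lt A n r"
    and "(n, f) \<in> F"
    and "\<sigma> \<in> A \<rightarrow> A"
  shows "f (app_tuple n \<sigma> a) = \<sigma> (f a)"
proof -
  define M where "M = a ` {..<n}"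
  define k where "k = card M"
  have aT: "a \<in> tuples A n" and kr: "enat k < r"
    using assms(5) unfolding tuples_lt_def k_def M_def by auto
  have aPi: "a \<in> {..<n} \<rightarrow>\<^sub>E A" using aT unfolding tuples_def by simp
  have MA: "M \<subseteq> A" using aPi unfolding M_def by auto
  obtain b where b: "bij_betw b {0..<k} M"
    using ex_bij_betw_nat_finite[of M] unfolding k_def M_def by auto
  have bk: "bij_betw b {..<k} M" using b by (simp add: atLeast0LessThan)
  define \<pi> where "\<pi> i = the_inv_into {..<k} b (a i)" for i
  have pi1: "\<pi> i < k" and pi2: "b (\<pi> i) = a i" if "i < n" for i
  proof -
    have "a i \<in> M" using that unfolding M_def by auto
    thus "\<pi> i < k" "b (\<pi> i) = a i" unfolding \<pi>_def
      using bk the_inv_into_into[of b "{..<k}" "a i"] f_the_inv_into_f_bij_betw[OF bk]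
      by (auto simp: bij_betw_def)
  qed
  have bA: "b j \<in> A" if "j < k" for j using bk MA that by (auto simp: bij_betw_def)
  define G where "G = comp_op A n k f (\<lambda>i. proj A k (\<pi> i))"
  have "(k, G) \<in> F" unfolding G_def
    using assms(1) assms(6) pi1 unfolding clone_def
    by auto
  hence "enat k < rnk A F" using kr assms(3) by simp
  then obtain j where j: "j < k" and Gj: "G = proj A k j"
    using small_proj[OF \<open>(k, G) \<in> F\<close>] unfolding is_proj_def by auto
  define bb where "bb = (\<lambda>j\<in>{..<k}. b j)"
  define cb where "cb = (\<lambda>j\<in>{..<k}. \<sigma> (b j))"
  have bbT: "bb \<in> tuples A k" unfolding bb_def tuples_def using bA by auto
  have cbT: "cb \<in> tuples A k" unfolding cb_def tuples_def using bA assms(7) by auto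
  have G1: "G bb = f (\<lambda>i\<in>{..<n}. bb (\<pi> i))"
    using bbT pi1 unfolding G_def comp_op_def proj_def by (auto intro!: arg_cong[where f=f])
  have G2: "G cb = f (\<lambda>i\<in>{..<n}. cb (\<pi> i))"
    using cbT pi1 unfolding G_def comp_op_def proj_def by (auto intro!: arg_cong[where f=f])
  have e1: "(\<lambda>i\<in>{..<n}. bb (\<pi> i)) = a"
    using aPi pi1 pi2 unfolding bb_def by (auto simp: PiE_def extensional_def)
  have e2: "(\<lambda>i\<in>{..<n}. cb (\<pi> i)) = app_tuple n \<sigma> a"
    using pi1 pi2 unfolding cb_def app_tuple_def by auto
  have "f a = b j" using G1 e1 Gj bbT j unfolding proj_def bb_def by auto
  moreover have "f (app_tuple n \<sigma> a) = \<sigma> (b j)" using G2 e2 Gj cbT j unfolding proj_def cb_def by auto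
  ultimately show ?thesis by simp
qed

end
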